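(* Let $A\in\mathbb{R}^{m\times n}$, $b\in\mathbb{R}^m$, and let $g:\mathbb{R}^m\to\mathbb{R}$ be $\mu_g$-strongly convex. Let $h(z):=g(z)-b^\top z$ and let $\hat z$ be the unique solution of $\min_{z}h(z)$ s.t. $A^\top z=0$. Let $\tilde z^*_k\in\mathbb{R}^m$, $z_k:=\nabla h^*(\tilde z^*_k)$, let $\mathcal{J}\subseteq[n]$ with $A_{:,\mathcal{J}}\ne 0$, $r:=(A_{:,\mathcal{J}})^\top z_k$, and for $\delta_z>0$ set $$\tilde z^*_{k+1}:=\tilde z^*_k-\delta_z\frac{\|r\|_2^2}{\|A_{:,\mathcal{J}}r\|_2^2}A_{:,\mathcal{J}}r,\qquad z_{k+1}:=\nabla h^*(\tilde z^*_{k+1})$$ (with $\tilde z^*_{k+1}:=\tilde z^*_k$ if $r=0$). Then $$D_h^{\tilde z^*_{k+1}}(z_{k+1},\hat z)\le D_h^{\tilde z^*_k}(z_k,\hat z)-\frac{\delta_z(2\mu_g-\delta_z)}{2\mu_g}\frac{\|r\|_2^4}{\|A_{:,\mathcal{J}}r\|_2^2}\le D_h^{\tilde z^*_k}(z_k,\hat z)-\frac{\delta_z(2\mu_g-\delta_z)}{2\mu_g}\frac{\|r\|_2^2}{\sigma_{\max}^2(A_{:,\mathcal{J}})},$$ where the middle term is interpreted as $0$ if $r=0$, and the second inequality is asserted for $0<\delta_z\le 2\mu_g$.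
   Context: $h^*$ denotes the Fenchel conjugate $h^*(u)=\sup_z\{\langle u,z\rangle-h(z)\}$, which is differentiable with $1/\mu_g$-Lipschitz gradient. The Bregman distance with respect to a convex function $h$ and $u\in\partial h(z)$ is $D_h^{u}(z,y):=h(y)-h(z)-\langle u,y-z\rangle=h^*(u)-\langle u,y\rangle+h(y)$ (note $\tilde z^*_k\in\partial h(z_k)$). $\sigma_{\max}(\cdot)$ is the largest singular value; $A_{:,\mathcal{J}}$ is the column submatrix indexed by $\mathcal{J}$. *)

theory Defs
  imports "HOL-Analysis.Analysis"
begin

definition strongly_convex :: "real \<Rightarrow> ('a::real_inner \<Rightarrow> real) \<Rightarrow> bool" where
  "strongly_convex mu f \<longleftrightarrow> convex_on UNIV (\<lambda>z. f z - mu / 2 * (norm z)\<^sup>2)"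

definition fenchel_conj :: "('a::real_inner \<Rightarrow> real) \<Rightarrow> 'a \<Rightarrow> real" where
  "fenchel_conj h u = (SUP z. inner u z - h z)"

definition bregman :: "('a::real_inner \<Rightarrow> real) \<Rightarrow> 'a \<Rightarrow> 'a \<Rightarrow> 'a \<Rightarrow> real" where
  "bregman h u z y = h y - h z - inner u (y - z)"

text \<open>Column submatrix A_{:,J}, represented as an m x n matrix whose columns outside J
  are zero (vectors in R^J are embedded in R^n by zero padding).\<close>
definition colsub :: "real^'n^'m \<Rightarrow> 'n set \<Rightarrow> real^'n^'m" where
  "colsub A J = (\<chi> i j. if j \<in> J then A $ i $ j else 0)"

definition sigma_max :: "real^'n^'m \<Rightarrow> real" where
  "sigma_max M = onorm (\<lambda>x. M *v x)"

end

theory Submission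
  imports Defs
begin


lemma convex_lower_bound:
  fixes c :: "'a::euclidean_space \<Rightarrow> real"
  assumes cv: "convex_on UNIV c"
  shows "\<exists>B\<ge>0. \<forall>z. c z \<ge> - B * norm z - B"
proof -
  have cont: "continuous_on UNIV c" using convex_on_continuous[OF open_UNIV cv] .
  have "compact (c ` cball 0 1)"
    by (rule compact_continuous_image) (auto intro: continuous_on_subset[OF cont])
  then obtain B0 where B0: "\<forall>x\<in>c ` cball 0 1. norm x \<le> B0"
    using compact_imp_bounded bounded_iff by metis
  define B where "B = max B0 0"
  have B: "\<And>x. norm x \<le> 1 \<Longrightarrow> \<bar>c x\<bar> \<le> B" using B0 unfolding B_def by force
  have "B \<ge> 0" unfolding B_def by simp
  have "c z \<ge> - (2*B) * norm z - 2*B" for z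
  proof (cases "norm z \<le> 1")
    case True
    have "0 \<le> B * norm z" using \<open>B \<ge> 0\<close> by simp
    then show ?thesis using B[OF True] \<open>B \<ge> 0\<close> by linarith
  next
    case False
    define n where "n = norm z"
    have n1: "n > 1" using False n_def by simp
    define t where "t = 1 / n"
    have t: "0 \<le> t" "t \<le> 1" using n1 t_def by auto
    have "c ((1 - t) *\<^sub>R 0 + t *\<^sub>R z) \<le> (1 - t) * c 0 + t * c z"
      using convex_onD[OF cv t, of 0 z] by simp
    moreover have "norm ((1 - t) *\<^sub>R 0 + t *\<^sub>R z) \<le> 1"
      using n1 t_def n_def by simp
    ultimately have h1: "- B \<le> (1 - t) * c 0 + t * c z" using B by (smt (verit, best) abs_le_iff)
    have h2: "- B \<le> c 0" using B[of 0] by (simp add: abs_le_iff)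
    have "n * (- B) \<le> n * ((1 - t) * c 0 + t * c z)" using h1 n1 by (intro mult_left_mono) auto
    also have "\<dots> = (n - n*t) * c 0 + (n*t) * c z" by (simp add: algebra_simps)
    also have "\<dots> = (n - 1) * c 0 + c z" using n1 t_def by simp
    finally have "- n * B \<le> (n - 1) * c 0 + c z" by simp
    moreover have "(n - 1) * c 0 \<le> (n-1) * B" using B[of 0] n1 by (intro mult_left_mono) (auto simp: abs_le_iff)
    ultimately have "c z \<ge> - n*B - (n-1)*B" by linarith
    then show ?thesis using n_def \<open>B \<ge> 0\<close> by (simp add: algebra_simps)
  qed
  then show ?thesis using \<open>B \<ge> 0\<close> by (intro exI[of _ "2*B"]) auto
qed





lemma max_exists:
  fixes c :: "'a::euclidean_space \<Rightarrow> real"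
  assumes cv: "convex_on UNIV c" and mu: "mu > 0"
  shows "\<exists>z. \<forall>y. inner u y - (c y + mu/2*(norm y)^2) \<le> inner u z - (c z + mu/2*(norm z)^2)"
proof -
  obtain B where B0: "B \<ge> 0" and B: "\<And>z. c z \<ge> - B * norm z - B"
    using convex_lower_bound[OF cv] by blast
  define \<phi> where "\<phi> y = inner u y - (c y + mu/2*(norm y)^2)" for y
  define K where "K = norm u + B"
  have ub: "\<phi> y \<le> K * norm y + B - mu/2*(norm y)^2" for y
  proof -
    have "inner u y \<le> norm u * norm y" using norm_cauchy_schwarz by blast
    moreover have "K * norm y = norm u * norm y + B * norm y" unfolding K_def by (simp add: distrib_right)
    ultimately show ?thesis using B[of y] unfolding \<phi>_def by linarith
  qed
  have cont: "continuous_on UNIV c" using convex_on_continuous[OF open_UNIV cv] .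
  have contphi: "continuous_on (cball 0 R) \<phi>" for R
    unfolding \<phi>_def by (intro continuous_intros continuous_on_subset[OF cont]) auto
  define R where "R = 2*(K + B + \<bar>\<phi> 0\<bar> + 1)/mu + 1"
  have K0: "K \<ge> 0" using B0 K_def by simp
  have R1: "R \<ge> 1" using mu K0 B0 unfolding R_def by simp
  have "mu/2 * R = (K + B + \<bar>\<phi> 0\<bar> + 1) + mu/2" using mu unfolding R_def by (simp add: field_simps)
  then have muR: "mu/2 * R \<ge> K + B + \<bar>\<phi> 0\<bar> + 1" using mu by linarith
  obtain z where zin: "z \<in> cball 0 R" and zmax: "\<forall>y\<in>cball 0 R. \<phi> y \<le> \<phi> z"
    using continuous_attains_sup[of "cball 0 R" \<phi>] contphi R1 by auto
  have "\<phi> y \<le> \<phi> z" for y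
  proof (cases "y \<in> cball 0 R")
    case True then show ?thesis using zmax by blast
  next
    case False
    define n where "n = norm y"
    have nR: "n > R" using False n_def by simp
    have "mu/2 * n^2 = n * (mu/2 * n)" by (simp add: power2_eq_square)
    also have "\<dots> \<ge> n * (mu/2 * R)" using nR R1 mu by (intro mult_left_mono) auto
    moreover have "n * (mu/2 * R) \<ge> n * (K + B + \<bar>\<phi> 0\<bar> + 1)"
      using muR nR R1 by (intro mult_left_mono) auto
    moreover have "n * (B + \<bar>\<phi> 0\<bar> + 1) \<ge> (B + \<bar>\<phi> 0\<bar> + 1)"
      using nR R1 B0 mult_right_mono[of 1 n "B + \<bar>\<phi> 0\<bar> + 1"] by auto
    moreover have "n * (K + B + \<bar>\<phi> 0\<bar> + 1) = K * n + n * (B + \<bar>\<phi> 0\<bar> + 1)"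
      by (simp add: algebra_simps)
    ultimately have "mu/2*n^2 \<ge> K * n + B + \<bar>\<phi> 0\<bar> + 1" by linarith
    then have "\<phi> y < \<phi> 0" using ub[of y, folded n_def] abs_ge_minus_self[of "\<phi> 0"] by linarith
    also have "\<phi> 0 \<le> \<phi> z" using zmax R1 by simp
    finally show ?thesis by simp
  qed
  then show ?thesis unfolding \<phi>_def by blast
qed




lemma grad_is_max:
  fixes h :: "'a::euclidean_space \<Rightarrow> real"
  assumes ex: "\<And>v. \<exists>z. \<forall>y. inner v y - h y \<le> inner v z - h z"
    and G: "(fenchel_conj h has_derivative (\<lambda>v. inner Gu v)) (at u)"
  shows "\<forall>y. inner u y - h y \<le> inner u Gu - h Gu"
proof -
  obtain Z where Z: "\<And>v y. inner v y - h y \<le> inner v (Z v) - h (Z v)" using ex by metis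
  have fc: "fenchel_conj h v = inner v (Z v) - h (Z v)" for v
    unfolding fenchel_conj_def by (rule cSup_eq_maximum) (auto simp: Z)
  define \<psi> where "\<psi> v = fenchel_conj h v - inner v (Z u)" for v
  have mn: "\<forall>v\<in>UNIV. \<psi> u \<le> \<psi> v" unfolding \<psi>_def fc using Z[of _ "Z u"] by (auto simp: algebra_simps)
  have d: "(\<psi> has_derivative (\<lambda>w. inner Gu w - inner w (Z u))) (at u)"
    unfolding \<psi>_def by (intro derivative_intros G)
  have "(\<lambda>w. inner Gu w - inner w (Z u)) = (\<lambda>w. 0)"
    using differential_zero_maxmin[OF _ open_UNIV d] mn by blast
  then have "inner Gu (Gu - Z u) - inner (Gu - Z u) (Z u) = 0" by metis
  then have "inner (Gu - Z u) (Gu - Z u) = 0" by (simp add: inner_diff inner_commute)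
  then have "Gu = Z u" by simp
  then show ?thesis using Z by blast
qed




lemma small_t:
  fixes a b c :: real
  assumes H: "\<And>t. 0 < t \<Longrightarrow> t < 1 \<Longrightarrow> a \<le> b + t * c" and c: "0 \<le> c"
  shows "a \<le> b"
proof (rule ccontr)
  assume "\<not> a \<le> b"
  then have ab: "a - b > 0" by simp
  define t where "t = min (1/2) ((a-b)/(2*(c+1)))"
  have t0: "t > 0" using ab c by (simp add: t_def)
  have t1: "t < 1" by (simp add: t_def)
  have "t * c \<le> (a-b)/(2*(c+1)) * c" using c by (intro mult_right_mono) (auto simp: t_def)
  also have "\<dots> < a - b"
  proof -
    have "(a-b)*c < (a-b)*(2*(c+1))" using ab c by (intro mult_strict_left_mono) auto
    then show ?thesis using c by (simp add: divide_less_eq)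
  qed
  finally show False using H[OF t0 t1] by simp
qed

lemma sc_ineq:
  fixes c :: "'a::real_inner \<Rightarrow> real"
  assumes cv: "convex_on UNIV c" and mu: "mu \<ge> 0"
    and sub: "\<forall>y. inner u y - (c y + mu/2*(norm y)^2) \<le> inner u z - (c z + mu/2*(norm z)^2)"
  shows "c y + mu/2*(norm y)^2 \<ge> c z + mu/2*(norm z)^2 + inner u (y - z) + mu/2*(norm (y-z))^2"
proof -
  define d where "d = y - z"
  have nrm: "(norm (z + t *\<^sub>R d))^2 = (norm z)^2 + 2*t*inner z d + t^2*(norm d)^2" for t
  proof -
    have "(norm (z + t *\<^sub>R d))^2 = (norm z)^2 + 2*inner z (t *\<^sub>R d) + (norm (t *\<^sub>R d))^2"
      using dot_norm[of z "t *\<^sub>R d"] by simp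
    moreover have "(norm (t *\<^sub>R d))^2 = t^2*(norm d)^2" by (simp add: power_mult_distrib)
    moreover have "inner z (t *\<^sub>R d) = t * inner z d" by simp
    ultimately show ?thesis by simp
  qed
  have key: "inner u d \<le> (c y - c z + mu * inner z d) + t * (mu/2*(norm d)^2)" if t: "0 < t" "t < 1" for t
  proof -
    have p: "(1 - t) *\<^sub>R z + t *\<^sub>R y = z + t *\<^sub>R d" by (simp add: d_def algebra_simps)
    have a: "inner u (z + t *\<^sub>R d) - (c (z + t *\<^sub>R d) + mu/2*(norm (z + t *\<^sub>R d))^2) \<le> inner u z - (c z + mu/2*(norm z)^2)"
      using sub by blast
    have b: "c (z + t *\<^sub>R d) \<le> (1 - t) * c z + t * c y"
      using convex_onD[OF cv, of t z y] t p by simp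
    have e1: "inner u (z + t *\<^sub>R d) = inner u z + t * inner u d" by (simp add: inner_add_right)
    have e2: "mu/2*(norm (z + t *\<^sub>R d))^2 = mu/2*(norm z)^2 + t * (mu * inner z d) + t * (t * (mu/2*(norm d)^2))"
      unfolding nrm by (simp add: algebra_simps power2_eq_square)
    have e3: "(1 - t) * c z = c z - t * c z" by (simp add: algebra_simps)
    have e4: "t * ((c y - c z + mu * inner z d) + t * (mu/2*(norm d)^2)) = t * c y - t * c z + t * (mu * inner z d) + t * (t * (mu/2*(norm d)^2))"
      by (simp add: algebra_simps)
    have "t * inner u d \<le> t * ((c y - c z + mu * inner z d) + t * (mu/2*(norm d)^2))"
      using a b e1 e2 e3 e4 by linarith
    then show ?thesis using t by simp
  qed
  have "inner u d \<le> c y - c z + mu * inner z d"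
    by (rule small_t[OF key]) (use mu in auto)
  moreover have ny: "(norm y)^2 = (norm z)^2 + 2*inner z d + (norm d)^2"
    using nrm[of 1] by (simp add: d_def)
  moreover have "mu/2*(norm y)^2 = mu/2*(norm z)^2 + mu*inner z d + mu/2*(norm d)^2"
    unfolding ny by (simp add: algebra_simps)
  ultimately show ?thesis unfolding d_def[symmetric] by linarith
qed





lemma bregman_step:
  fixes H :: "'a::real_inner \<Rightarrow> real"
  assumes mu: "mu > 0"
    and sc: "\<And>u y. H y \<ge> H (G u) + inner u (y - G u) + mu/2*(norm (y - G u))^2"
  shows "bregman H u' (G u') x \<le> bregman H u (G u) x + inner (u' - u) (G u - x) + (norm (u' - u))^2/(2*mu)"
proof -
  define z where "z = G u"
  define z' where "z' = G u'"
  define w where "w = u' - u"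
  define e where "e = z' - z"
  have s: "H z' \<ge> H z + inner u (z' - z) + mu/2*(norm (z' - z))^2" using sc[of u z'] unfolding z_def by simp
  have q: "inner w e - mu/2*(norm e)^2 \<le> (norm w)^2/(2*mu)"
  proof -
    have "0 \<le> (norm (w - mu *\<^sub>R e))^2" by simp
    also have "\<dots> = (norm w)^2 - 2*inner w (mu *\<^sub>R e) + (norm (mu *\<^sub>R e))^2"
      using dot_norm_neg[of w "mu *\<^sub>R e"] by simp
    also have "\<dots> = (norm w)^2 - 2*mu*inner w e + mu^2*(norm e)^2"
      by (simp add: power_mult_distrib)
    finally have "2*mu*(inner w e - mu/2*(norm e)^2) \<le> (norm w)^2"
      by (simp add: algebra_simps power2_eq_square)
    then show ?thesis using mu by (simp add: field_simps)
  qed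
  have eq: "bregman H u' z' x - bregman H u z x = H z - H z' + inner u' (z' - x) - inner u (z - x)"
    unfolding bregman_def by (simp add: inner_diff_right inner_commute algebra_simps)
  have eq2: "inner u' (z' - x) - inner u (z - x) - inner u (z' - z) = inner w (z - x) + inner w e"
    unfolding w_def e_def by (simp add: inner_diff_right inner_diff_left algebra_simps)
  show ?thesis using s q eq eq2 unfolding z_def[symmetric] z'_def[symmetric] w_def[symmetric] e_def[symmetric]
    by linarith
qed

lemma colsub_transpose_zero:
  assumes "transpose A *v zhat = 0"
  shows "transpose (colsub A J) *v zhat = 0"
proof -
  have "(transpose (colsub A J) *v zhat) $ j = (if j \<in> J then (transpose A *v zhat) $ j else 0)" for j
    by (simp add: matrix_vector_mult_def transpose_def colsub_def)
  then show ?thesis using assms by (simp add: vec_eq_iff)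
qed

lemma inner_mat: "inner (transpose M *v x) y = inner x (M *v (y::real^'n))"
  by (metis dot_lmul_matrix transpose_matrix_vector)




theorem mainTheorem3:
  fixes A :: "real^'n^'m" and b :: "real^'m" and g :: "real^'m \<Rightarrow> real"
    and mu \<delta> :: real and zhat zs :: "real^'m" and J :: "'n set"
    and G :: "real^'m \<Rightarrow> real^'m"
  assumes mu_pos: "mu > 0"
    and g_sc: "strongly_convex mu g"
    and G_grad: "\<And>u. ((fenchel_conj (\<lambda>z. g z - inner b z)) has_derivative (\<lambda>v. inner (G u) v)) (at u)"
    and zhat_feas: "transpose A *v zhat = 0"
    and zhat_min: "\<And>z. transpose A *v z = 0 \<Longrightarrow> g zhat - inner b zhat \<le> g z - inner b z"
    and AJ_nz: "colsub A J \<noteq> 0"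
    and delta_pos: "\<delta> > 0"
  shows
   "let h = (\<lambda>z. g z - inner b z); AJ = colsub A J; zk = G zs;
        r = transpose AJ *v zk;
        zs' = (if r = 0 then zs else zs - (\<delta> * (norm r)\<^sup>2 / (norm (AJ *v r))\<^sup>2) *\<^sub>R (AJ *v r));
        zk' = G zs';
        mid = (if r = 0 then 0 else \<delta> * (2 * mu - \<delta>) / (2 * mu) * (norm r) ^ 4 / (norm (AJ *v r))\<^sup>2)
    in bregman h zs' zk' zhat \<le> bregman h zs zk zhat - mid
       \<and> (\<delta> \<le> 2 * mu \<longrightarrow>
            bregman h zs zk zhat - mid
              \<le> bregman h zs zk zhat - \<delta> * (2 * mu - \<delta>) / (2 * mu) * (norm r)\<^sup>2 / (sigma_max AJ)\<^sup>2)"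
proof -
  define H where "H = (\<lambda>z. g z - inner b z)"
  define c where "c z = g z - inner b z - mu/2*(norm z)^2" for z
  have cv1: "convex_on UNIV (\<lambda>z. g z - mu / 2 * (norm z)\<^sup>2)" using g_sc unfolding strongly_convex_def .
  have cv2: "convex_on UNIV (\<lambda>z. - inner b z)"
    unfolding convex_on_def by (auto simp: inner_add_right algebra_simps)
  have "convex_on UNIV (\<lambda>z. (g z - mu / 2 * (norm z)\<^sup>2) + (- inner b z))"
    by (rule convex_on_add[OF cv1 cv2])
  then have cv: "convex_on UNIV c" unfolding c_def by (simp add: algebra_simps)
  have Hc: "H = (\<lambda>z. c z + mu/2*(norm z)^2)" unfolding H_def c_def by auto
  have ex: "\<exists>z. \<forall>y. inner v y - H y \<le> inner v z - H z" for v
    unfolding Hc using max_exists[OF cv mu_pos] by blast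
  have gm: "\<forall>y. inner u y - H y \<le> inner u (G u) - H (G u)" for u
    by (rule grad_is_max[OF ex]) (use G_grad in \<open>simp add: H_def\<close>)
  have sc: "H y \<ge> H (G u) + inner u (y - G u) + mu/2*(norm (y - G u))^2" for u y
    using sc_ineq[OF cv less_imp_le[OF mu_pos] gm[of u, unfolded Hc], of y] unfolding Hc by simp
  note step = bregman_step[of mu H G, OF mu_pos sc]
  define AJ where "AJ = colsub A J"
  define zk where "zk = G zs"
  define r where "r = transpose AJ *v zk"
  define zs' where "zs' = (if r = 0 then zs else zs - (\<delta> * (norm r)\<^sup>2 / (norm (AJ *v r))\<^sup>2) *\<^sub>R (AJ *v r))"
  define zk' where "zk' = G zs'"
  define mid where "mid = (if r = 0 then 0 else \<delta> * (2 * mu - \<delta>) / (2 * mu) * (norm r) ^ 4 / (norm (AJ *v r))\<^sup>2)"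
  define \<kappa> where "\<kappa> = \<delta> * (2 * mu - \<delta>) / (2 * mu)"
  have P: "bregman H zs' zk' zhat \<le> bregman H zs zk zhat - mid \<and> (\<delta> \<le> 2 * mu \<longrightarrow>
            bregman H zs zk zhat - mid
              \<le> bregman H zs zk zhat - \<delta> * (2 * mu - \<delta>) / (2 * mu) * (norm r)\<^sup>2 / (sigma_max AJ)\<^sup>2)"
  proof (cases "r = 0")
    case True
    then show ?thesis unfolding zs'_def mid_def zk'_def zk_def by simp
  next
    case False
    define w where "w = AJ *v r"
    define a where "a = (norm r)^2"
    define q where "q = (norm w)^2"
    have a0: "a > 0" using False unfolding a_def by simp
    have zhat0: "transpose AJ *v zhat = 0" unfolding AJ_def by (rule colsub_transpose_zero[OF zhat_feas])
    have wzk: "inner zk w = a" unfolding a_def w_def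
    proof -
      have "inner r r = inner zk (AJ *v r)" using inner_mat[of AJ zk r] by (simp only: r_def[symmetric])
      then show "inner zk (AJ *v r) = (norm r)^2" by (simp add: power2_norm_eq_inner)
    qed
    have wzh: "inner zhat w = 0" unfolding w_def using inner_mat[of AJ zhat r] zhat0 by simp
    have w0: "w \<noteq> 0" using wzk a0 by auto
    have q0: "q > 0" using w0 unfolding q_def by simp
    define t where "t = \<delta> * a / q"
    have zs'e: "zs' = zs - t *\<^sub>R w" using False unfolding zs'_def t_def a_def q_def w_def by simp
    have n4: "(norm r)^4 = a^2" unfolding a_def by (simp flip: power_mult)
    have midv: "mid = \<kappa> * a^2 / q" using False unfolding mid_def \<kappa>_def q_def w_def n4 by simp
    have s1: "bregman H zs' zk' zhat \<le> bregman H zs zk zhat + inner (zs' - zs) (zk - zhat) + (norm (zs' - zs))^2/(2*mu)"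
      using step[of zs' zhat zs] unfolding zk'_def zk_def .
    have s2: "inner (zs' - zs) (zk - zhat) = - t * a"
      unfolding zs'e using wzk wzh by (simp add: inner_diff_right inner_commute)
    have s3: "(norm (zs' - zs))^2/(2*mu) = t^2 * q / (2*mu)"
      unfolding zs'e q_def by (simp add: power_mult_distrib)
    have s4: "- t * a + t^2 * q / (2*mu) = - mid"
      unfolding midv t_def \<kappa>_def using q0 mu_pos by (simp add: field_simps power2_eq_square)
    have P1: "bregman H zs' zk' zhat \<le> bregman H zs zk zhat - mid" using s1 s2 s3 s4 by linarith
    have P2: "\<kappa> * (norm r)\<^sup>2 / (sigma_max AJ)\<^sup>2 \<le> mid" if d: "\<delta> \<le> 2 * mu"
    proof -
      have k0: "\<kappa> \<ge> 0" unfolding \<kappa>_def using d delta_pos mu_pos by simp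
      have "norm w \<le> sigma_max AJ * norm r" unfolding w_def sigma_max_def
        by (rule onorm[OF matrix_vector_mul_bounded_linear])
      then have "q \<le> (sigma_max AJ)^2 * a" unfolding q_def a_def
        by (metis norm_ge_zero power_mono power_mult_distrib)
      then have "a / (sigma_max AJ)^2 \<le> a^2 / q" using q0 a0
        by (smt (verit, ccfv_SIG) divide_le_cancel frac_le mult.commute nonzero_mult_div_cancel_left power2_eq_square times_divide_eq_left zero_le_power2)
      then have "\<kappa> * (a / (sigma_max AJ)^2) \<le> \<kappa> * (a^2 / q)" using k0 by (rule mult_left_mono)
      then show ?thesis unfolding midv a_def by simp
    qed
    show ?thesis using P1 P2 unfolding \<kappa>_def by auto
  qed
  show ?thesis unfolding Let_def H_def[symmetric] AJ_def[symmetric] zk_def[symmetric]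
      r_def[symmetric] zs'_def[symmetric] zk'_def[symmetric] mid_def[symmetric]
    using P .
qed


end
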